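(* Let $K_4$ be the complete graph on $4$ vertices. The $3$-uniform power hypergraph $K_4^{(3)}$ has the eigenvalue $5^{1/3}$ (the real cube root of $5$), whereas no induced subgraph of $K_4$ has an eigenvalue $\beta$ with $\beta^2=5$. (In particular, the statement "$\lambda$ is an eigenvalue of $G^{(3)}$ iff some induced subgraph of $G$ has an eigenvalue $\beta$ with $\beta^2=\lambda^3$" is false.)
   Context: Tensor eigenvalues: for a $k$-order $n$-dimensional tensor $T=(t_{i_1\cdots i_k})$, $\lambda\in\mathbb{C}$ is an eigenvalue if there is $\mathbf{x}\ne 0$ with $\sum_{i_2,\dots,i_k}t_{ii_2\cdots i_k}x_{i_2}\cdots x_{i_k}=\lambda x_i^{k-1}$ for all $i$. The adjacency tensor of a $k$-uniform hypergraph has entry $\frac1{(k-1)!}$ at $(i_1,\dots,i_k)$ if $\{i_1,\dots,i_k\}$ is an edge and $0$ otherwise; eigenvalues of the hypergraph are those of this tensor. The $k$-power hypergraph $G^{(k)}$ of a graph $G$ is the $k$-uniform hypergraph obtained by adding $k-2$ new vertices to each edge of $G$, with distinct edges receiving disjoint sets of new vertices. Eigenvalues of a graph are eigenvalues of its adjacency matrix. *)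

theory Defs
  imports Complex_Main
begin

(* A k-order tensor with index set V is a function T :: 'v list => complex,
   evaluated on index lists of length k with entries in V. *)
definition tensor_eigenvalue :: "nat \<Rightarrow> 'v set \<Rightarrow> ('v list \<Rightarrow> complex) \<Rightarrow> complex \<Rightarrow> bool" where
  "tensor_eigenvalue k V T lam \<longleftrightarrow>
     (\<exists>x :: 'v \<Rightarrow> complex. (\<exists>i\<in>V. x i \<noteq> 0) \<and>
        (\<forall>i\<in>V. (\<Sum>ys\<in>{ys. set ys \<subseteq> V \<and> length ys = k - 1}.
                     T (i # ys) * (\<Prod>j<k - 1. x (ys ! j))) = lam * x i ^ (k - 1)))"

definition hyper_adj_tensor :: "nat \<Rightarrow> 'v set set \<Rightarrow> 'v list \<Rightarrow> complex" where
  "hyper_adj_tensor k E ys = (if set ys \<in> E then 1 / of_nat (fact (k - 1)) else 0)"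

definition hypergraph_eigenvalue :: "nat \<Rightarrow> 'v set \<Rightarrow> 'v set set \<Rightarrow> complex \<Rightarrow> bool" where
  "hypergraph_eigenvalue k V E lam \<longleftrightarrow> tensor_eigenvalue k V (hyper_adj_tensor k E) lam"

(* k-power hypergraph of a graph (V, E), E a set of 2-element subsets of V:
   original vertices Inl v, new vertices Inr (e, j), j < k - 2, for each edge e *)
definition power_vertices :: "nat \<Rightarrow> 'a set \<Rightarrow> 'a set set \<Rightarrow> ('a + ('a set \<times> nat)) set" where
  "power_vertices k V E = Inl ` V \<union> {Inr (e, j) | e j. e \<in> E \<and> j < k - 2}"

definition power_edges :: "nat \<Rightarrow> 'a set set \<Rightarrow> ('a + ('a set \<times> nat)) set set" where
  "power_edges k E = {Inl ` e \<union> {Inr (e, j) | j. j < k - 2} | e. e \<in> E}"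

definition induced_graph_eigenvalue :: "'a set \<Rightarrow> 'a set set \<Rightarrow> complex \<Rightarrow> bool" where
  "induced_graph_eigenvalue S E \<beta> \<longleftrightarrow>
     (\<exists>x :: 'a \<Rightarrow> complex. (\<exists>v\<in>S. x v \<noteq> 0) \<and>
        (\<forall>u\<in>S. (\<Sum>w\<in>S. (if {u, w} \<in> E then 1 else 0) * x w) = \<beta> * x u))"

definition K4_vertices :: "nat set" where "K4_vertices = {0..<4}"
definition K4_edges :: "nat set set" where
  "K4_edges = {{a, b} | a b. a \<in> K4_vertices \<and> b \<in> K4_vertices \<and> a \<noteq> b}"

end

theory Submission
  imports Defs
begin


lemma list2_set: "{ys. set ys \<subseteq> V \<and> length ys = 2} = (\<lambda>(a,b). [a,b]) ` (V \<times> V)"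
proof (rule set_eqI, rule iffI)
  fix ys assume "ys \<in> {ys. set ys \<subseteq> V \<and> length ys = 2}"
  then obtain a b where "ys = [a,b]" "a \<in> V" "b \<in> V"
    by (auto simp: numeral_2_eq_2 length_Suc_conv)
  then show "ys \<in> (\<lambda>(a,b). [a,b]) ` (V \<times> V)" by auto
qed auto

lemma pair_eq:
  assumes "i \<noteq> p" "i \<noteq> q" "p \<noteq> q"
  shows "({i,a,b} = {i,p,q}) \<longleftrightarrow> ((a,b) = (p,q) \<or> (a,b) = (q,p))"
  using assms by (auto simp: insert_eq_iff) (smt (verit) insertCI insertE singletonD)+

lemma per_edge:
  assumes fin: "finite V" and c: "card e = 3" and sub: "e \<subseteq> V"
  shows "(\<Sum>z\<in>V \<times> V. if e = {i, fst z, snd z} then x (fst z) * x (snd z) / 2 else (0::complex))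
       = (if i \<in> e then \<Prod>w\<in>e-{i}. x w else 0)"
proof (cases "i \<in> e")
  case False
  then show ?thesis by (auto intro!: sum.neutral)
next
  case True
  have "card (e - {i}) = 2" using c True fin sub
    by (simp add: card_Diff_singleton)
  then obtain p q where pq: "e - {i} = {p,q}" "p \<noteq> q" by (auto simp: card_2_iff)
  have e: "e = {i,p,q}" using pq True by auto
  have d: "i \<noteq> p" "i \<noteq> q" using pq by auto
  have pV: "p \<in> V" "q \<in> V" using sub e by auto
  have "(\<Sum>z\<in>V \<times> V. if e = {i, fst z, snd z} then x (fst z) * x (snd z) / 2 else (0::complex))
      = (\<Sum>z\<in>V \<times> V. if z \<in> {(p,q),(q,p)} then x (fst z) * x (snd z) / 2 else (0::complex))"
    apply (rule sum.cong, simp)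
    using pair_eq[OF d pq(2)] e by (metis insert_iff prod.collapse singletonD surjective_pairing)
  also have "\<dots> = (\<Sum>z\<in>(V \<times> V) \<inter> {(p,q),(q,p)}. x (fst z) * x (snd z) / 2)"
    by (rule sum.inter_restrict[symmetric]) (use fin in simp)
  also have "(V \<times> V) \<inter> {(p,q),(q,p)} = {(p,q),(q,p)}" using pV by auto
  also have "(\<Sum>z\<in>{(p,q),(q,p)}. x (fst z) * x (snd z) / 2) = x p * x q"
    using pq(2) by (simp add: field_simps)
  also have "x p * x q = (\<Prod>w\<in>e-{i}. x w)" using pq by simp
  finally show ?thesis using True by simp
qed

lemma tensor_sum3:
  assumes fin: "finite V" "finite E" and E: "\<forall>e\<in>E. card e = 3 \<and> e \<subseteq> V"
  shows "(\<Sum>ys\<in>{ys. set ys \<subseteq> V \<and> length ys = 3 - 1}. hyper_adj_tensor 3 E (i # ys) * (\<Prod>j<3-1. x (ys ! j)))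
     = (\<Sum>e\<in>{e\<in>E. i\<in>e}. \<Prod>w\<in>e-{i}. x w)"
proof -
  have three_one: "(3::nat) - 1 = 2" by simp
  have inj: "inj_on (\<lambda>(a,b). [a,b]) (V \<times> V)" by (auto simp: inj_on_def)
  have "(\<Sum>ys\<in>{ys. set ys \<subseteq> V \<and> length ys = 3 - 1}. hyper_adj_tensor 3 E (i # ys) * (\<Prod>j<3-1. x (ys ! j)))
     = (\<Sum>z\<in>V \<times> V. hyper_adj_tensor 3 E [i, fst z, snd z] * (x (fst z) * x (snd z)))"
    unfolding three_one
    apply (subst list2_set) apply (subst sum.reindex[OF inj])
    by (simp add: numeral_2_eq_2 lessThan_Suc case_prod_beta mult.commute)
  also have "\<dots> = (\<Sum>z\<in>V \<times> V. \<Sum>e\<in>E. if e = {i, fst z, snd z} then x (fst z) * x (snd z) / 2 else 0)"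
    apply (rule sum.cong, simp)
    using fin(2) by (auto simp: hyper_adj_tensor_def sum.delta' numeral_2_eq_2 insert_commute)
  also have "\<dots> = (\<Sum>e\<in>E. \<Sum>z\<in>V \<times> V. if e = {i, fst z, snd z} then x (fst z) * x (snd z) / 2 else 0)"
    by (rule sum.swap)
  also have "\<dots> = (\<Sum>e\<in>E. if i \<in> e then \<Prod>w\<in>e-{i}. x w else 0)"
    by (rule sum.cong, simp) (use E fin in \<open>simp add: per_edge\<close>)
  also have "\<dots> = (\<Sum>e\<in>{e\<in>E. i\<in>e}. \<Prod>w\<in>e-{i}. x w)"
    by (simp add: sum.inter_filter fin)
  finally show ?thesis .
qed


lemma lt4: "(a::nat) < 4 \<Longrightarrow> a = 0 \<or> a = 1 \<or> a = 2 \<or> a = 3" by auto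
lemma K4A: "(f::nat set) \<in> K4_edges \<Longrightarrow> \<exists>a b. f = {a,b} \<and> a \<noteq> b \<and> a < 4 \<and> b < 4"
proof -
  assume "f \<in> K4_edges"
  then obtain a b where "f = {a,b}" "a \<in> K4_vertices" "b \<in> K4_vertices" "a \<noteq> b"
    unfolding K4_edges_def by (elim CollectE exE conjE) 
  then show ?thesis unfolding K4_vertices_def atLeastLessThan_iff by (intro exI[of _ a] exI[of _ b]) simp
qed
lemma K4B: "a \<noteq> b \<Longrightarrow> a < 4 \<Longrightarrow> b < (4::nat) \<Longrightarrow> {a,b} \<in> {{0,1},{0,2},{0,3},{1,2},{1,3},{2,3}}"
  apply (drule lt4)+ by (elim disjE; simp add: insert_commute)
lemma K4C: "a \<noteq> b \<Longrightarrow> a < 4 \<Longrightarrow> b < (4::nat) \<Longrightarrow> {a,b} \<in> K4_edges"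
  unfolding K4_edges_def K4_vertices_def by (intro CollectI exI[of _ a] exI[of _ b]) simp
lemma K4e: "K4_edges = {{0,1},{0,2},{0,3},{1,2},{1,3},{2,3}}"
proof (rule set_eqI, rule iffI)
  fix f :: "nat set" assume "f \<in> K4_edges"
  then obtain a b where ab: "f = {a,b}" "a \<noteq> b" "a < 4" "b < 4" using K4A by blast
  show "f \<in> {{0,1},{0,2},{0,3},{1,2},{1,3},{2,3}}" unfolding ab(1) using K4B ab(2-4) .
next
  fix f :: "nat set" assume "f \<in> {{0,1},{0,2},{0,3},{1,2},{1,3},{2,3}}"
  then show "f \<in> K4_edges"
    by (elim insertE emptyE) (simp_all add: K4C)
qed
lemma Inr1: "{Inr (e,j) | j. j < (3::nat) - 2} = {Inr (e,0)}" by auto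
lemma PE: "power_edges 3 K4_edges = (\<lambda>e. Inl ` e \<union> {Inr (e,0)}) ` K4_edges"
  unfolding power_edges_def Inr1 by blast
lemma Inr2: "{Inr (e, j) | e j. e \<in> E \<and> j < (3::nat) - 2} = (\<lambda>e. Inr (e,0)) ` E" by auto
lemma PV: "power_vertices 3 K4_vertices K4_edges = Inl ` {0..<4} \<union> (\<lambda>e. Inr (e,0)) ` K4_edges"
  unfolding power_vertices_def K4_vertices_def Inr2 ..
definition dd :: real where "dd = root 6 5"
definition gg :: real where "gg = root 3 ((1 + dd^3)/2)"

lemma dd6: "dd^6 = 5" unfolding dd_def by (rule real_root_pow_pos2) auto
lemma ddpos: "dd > 0" unfolding dd_def by (rule real_root_gt_zero) auto
lemma gg3: "gg^3 = (1 + dd^3)/2" unfolding gg_def using ddpos by (intro real_root_pow_pos2) auto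
lemma cdd: "root 3 5 = dd^2"
proof (rule real_root_pos_unique)
  have "(dd^2)^3 = dd^6" by (simp only: power_mult[symmetric]) simp
  then show "(dd^2)^3 = 5" using dd6 by simp
qed auto
definition xv :: "nat + (nat set \<times> nat) \<Rightarrow> complex" where
  "xv z = (case z of Inl a \<Rightarrow> of_real (if a \<le> 1 then dd else dd*gg^2)
     | Inr (e,j) \<Rightarrow> of_real (if e = {0,1} then -1 else if e = {2,3} then gg^2 else gg))"

definition fe :: "nat + (nat set \<times> nat) \<Rightarrow> nat set \<Rightarrow> complex" where
  "fe i e = (if i \<in> Inl ` e \<union> {Inr (e,0)} then \<Prod>w\<in>(Inl ` e \<union> {Inr (e,0)})-{i}. xv w else 0)"


lemma fin_power: "finite (power_edges 3 K4_edges)" "finite (power_vertices 3 K4_vertices K4_edges)"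
  unfolding PE PV unfolding K4e by simp_all
lemma sumE:
  "(\<Sum>e\<in>{e\<in>power_edges 3 K4_edges. i\<in>e}. \<Prod>w\<in>e-{i}. xv w)
    = fe i {0,1} + fe i {0,2} + fe i {0,3} + fe i {1,2} + fe i {1,3} + fe i {2,3}"
proof -
  have inj: "inj_on (\<lambda>e. Inl ` e \<union> {Inr (e,0)}) K4_edges" by (auto simp: inj_on_def)
  have "(\<Sum>e\<in>{e\<in>power_edges 3 K4_edges. i\<in>e}. \<Prod>w\<in>e-{i}. xv w)
     = (\<Sum>e\<in>power_edges 3 K4_edges. if i\<in>e then \<Prod>w\<in>e-{i}. xv w else 0)"
    by (simp add: sum.inter_filter fin_power)
  also have "\<dots> = (\<Sum>e\<in>K4_edges. fe i e)"
    unfolding PE by (subst sum.reindex[OF inj]) (auto simp: fe_def intro!: sum.cong)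
  also have "\<dots> = fe i {0,1} + fe i {0,2} + fe i {0,3} + fe i {1,2} + fe i {1,3} + fe i {2,3}"
    unfolding K4e by (simp add: doubleton_eq_iff add.assoc)
  finally show ?thesis .
qed


lemma R1: "2*(dd*(gg*gg^2)) - dd = dd^4"
  using gg3 dd6 by algebra
lemma R2: "2*(dd*gg) + gg^2*(dd*gg^2) = dd^2*(dd*gg^2)^2"
  using gg3 dd6 by algebra

lemma vert_eq:
  assumes "i \<in> power_vertices 3 K4_vertices K4_edges"
  shows "fe i {0,1} + fe i {0,2} + fe i {0,3} + fe i {1,2} + fe i {1,3} + fe i {2,3}
         = of_real (root 3 5) * xv i ^ (3-1)"
proof -
  have "i \<in> Inl ` {0..<4} \<union> (\<lambda>e. Inr (e,0)) ` {{0,1},{0,2},{0,3},{1,2},{1,3},{2,3}}"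
    using assms unfolding PV K4e[symmetric] .
  then have "i = Inl 0 \<or> i = Inl 1 \<or> i = Inl 2 \<or> i = Inl 3 \<or> i = Inr ({0,1},0) \<or> i = Inr ({0,2},0)
     \<or> i = Inr ({0,3},0) \<or> i = Inr ({1,2},0) \<or> i = Inr ({1,3},0) \<or> i = Inr ({2,3},0)"
    by (auto dest!: lt4)
  then show ?thesis
    apply (elim disjE)
    apply (simp_all add: fe_def xv_def insert_Diff_if doubleton_eq_iff cdd power2_eq_square)
    using arg_cong[OF R1, of complex_of_real] arg_cong[OF R2, of complex_of_real]
    by (simp_all add: power2_eq_square power4_eq_xxxx)
qed



lemma adjK4: "u \<in> K4_vertices \<Longrightarrow> w \<in> K4_vertices \<Longrightarrow> ({u,w} \<in> K4_edges \<longleftrightarrow> u \<noteq> w)"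
proof
  assume "{u,w} \<in> K4_edges"
  then obtain a b where ab: "{u,w} = {a,b}" "a \<noteq> b" using K4A by blast
  have "a \<in> {u,w}" "b \<in> {u,w}" unfolding ab(1) by simp_all
  then show "u \<noteq> w" using ab(2) by auto
next
  assume "u \<in> K4_vertices" "w \<in> K4_vertices" "u \<noteq> w"
  then show "{u,w} \<in> K4_edges" using K4C unfolding K4_vertices_def by simp
qed

lemma part2: "\<not> (\<exists>S \<subseteq> K4_vertices. \<exists>\<beta>. induced_graph_eigenvalue S K4_edges \<beta> \<and> \<beta>^2 = 5)"
proof
  assume "\<exists>S \<subseteq> K4_vertices. \<exists>\<beta>. induced_graph_eigenvalue S K4_edges \<beta> \<and> \<beta>^2 = 5"
  then obtain S \<beta> where S: "S \<subseteq> K4_vertices" and b5: "\<beta>^2 = 5" and ie: "induced_graph_eigenvalue S K4_edges \<beta>"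
    by (elim exE conjE) 
  from ie obtain x v where v: "v \<in> S" "x v \<noteq> 0"
    and eq0: "\<forall>u\<in>S. (\<Sum>w\<in>S. (if {u, w} \<in> K4_edges then 1 else 0) * x w) = \<beta> * x u"
    unfolding induced_graph_eigenvalue_def by (elim exE conjE bexE)
  have eq: "\<And>u. u \<in> S \<Longrightarrow> (\<Sum>w\<in>S. (if {u, w} \<in> K4_edges then 1 else 0) * x w) = \<beta> * x u"
    using eq0 by simp
  have finS: "finite S" using S unfolding K4_vertices_def using finite_subset by blast
  define s where "s = sum x S"
  have eq2: "\<beta> * x u = s - x u" if u: "u \<in> S" for u
  proof -
    have "(\<Sum>w\<in>S. (if {u, w} \<in> K4_edges then 1 else 0) * x w) = (\<Sum>w\<in>S. if w \<noteq> u then x w else 0)"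
    proof (rule sum.cong[OF refl])
      fix w assume w: "w \<in> S"
      have "u \<in> K4_vertices" "w \<in> K4_vertices" using S u w by (auto dest: subsetD)
      then have "({u,w} \<in> K4_edges) = (w \<noteq> u)" using adjK4 by metis
      then show "(if {u, w} \<in> K4_edges then 1 else 0) * x w = (if w \<noteq> u then x w else 0)" by simp
    qed
    also have "\<dots> = (\<Sum>w\<in>S-{u}. x w)"
    proof -
      have "{w\<in>S. w \<noteq> u} = S - {u}" by blast
      then show ?thesis using sum.inter_filter[OF finS, of x "\<lambda>w. w \<noteq> u"] by simp
    qed
    also have "\<dots> = s - x u" unfolding s_def using finS u by (simp add: sum_diff1)
    finally show ?thesis using eq[OF u] by simp
  qed
  have card4: "card S \<le> 4" using S card_mono[of K4_vertices S] unfolding K4_vertices_def by auto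
  show False
  proof (cases "s = 0")
    case True
    then have "(\<beta> + 1) * x v = 0" using eq2[OF v(1)] by (simp add: algebra_simps)
    then have "\<beta> = -1" using v(2) by (simp add: add_eq_0_iff2)
    then show False using b5 by simp
  next
    case False
    have "\<beta> * s = (\<Sum>u\<in>S. \<beta> * x u)" unfolding s_def by (simp add: sum_distrib_left)
    also have "\<dots> = (\<Sum>u\<in>S. s - x u)" using eq2 by simp
    also have "\<dots> = of_nat (card S) * s - s" unfolding s_def by (simp add: sum_subtractf)
    finally have "(\<beta> - (of_nat (card S) - 1)) * s = 0" by (simp add: algebra_simps)
    then have "\<beta> = of_nat (card S) - 1" using False by simp
    then show False using b5 card4
      by (cases "card S"; cases "card S - 1"; cases "card S - 2"; cases "card S - 3"; auto simp: power2_eq_square)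
  qed
qed
lemma edges_ok: "\<forall>e\<in>power_edges 3 K4_edges. card e = 3 \<and> e \<subseteq> power_vertices 3 K4_vertices K4_edges"
proof
  fix e assume "e \<in> power_edges 3 K4_edges"
  then obtain f where f: "f \<in> K4_edges" "e = Inl ` f \<union> {Inr (f,0)}" unfolding PE by (elim imageE) simp
  then obtain a b where ab: "f = {a,b}" "a \<noteq> b" "a < 4" "b < 4"
    using K4A by blast
  show "card e = 3 \<and> e \<subseteq> power_vertices 3 K4_vertices K4_edges"
  proof
    have e: "e = {Inr (f,0), Inl a, Inl b}" unfolding f(2) ab(1) by simp
    show "card e = 3" unfolding e using ab(2) by simp
    have "Inl a \<in> Inl ` {0..<4::nat}" "Inl b \<in> Inl ` {0..<4::nat}" using ab(3,4) by simp_all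
    moreover have "Inr (f,0) \<in> (\<lambda>e. Inr (e,0)) ` K4_edges" using f(1) by simp
    ultimately show "e \<subseteq> power_vertices 3 K4_vertices K4_edges" unfolding e PV insert_subset Un_iff by (intro conjI empty_subsetI; blast)
  qed
qed

theorem mainTheorem3:
  shows "hypergraph_eigenvalue 3 (power_vertices 3 K4_vertices K4_edges) (power_edges 3 K4_edges)
           (complex_of_real (root 3 5))
         \<and> \<not> (\<exists>S \<subseteq> K4_vertices. \<exists>\<beta>. induced_graph_eigenvalue S K4_edges \<beta> \<and> \<beta>^2 = 5)"
proof
  show "hypergraph_eigenvalue 3 (power_vertices 3 K4_vertices K4_edges) (power_edges 3 K4_edges)
           (complex_of_real (root 3 5))"
    unfolding hypergraph_eigenvalue_def tensor_eigenvalue_def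
  proof (intro exI conjI ballI)
    show "\<exists>i\<in>power_vertices 3 K4_vertices K4_edges. xv i \<noteq> 0"
      by (rule bexI[of _ "Inl 0"]) (use ddpos in \<open>auto simp: xv_def PV\<close>)
    fix i assume i: "i \<in> power_vertices 3 K4_vertices K4_edges"
    show "(\<Sum>ys\<in>{ys. set ys \<subseteq> power_vertices 3 K4_vertices K4_edges \<and> length ys = 3 - 1}.
            hyper_adj_tensor 3 (power_edges 3 K4_edges) (i # ys) * (\<Prod>j<3 - 1. xv (ys ! j)))
          = complex_of_real (root 3 5) * xv i ^ (3 - 1)"
      unfolding tensor_sum3[OF fin_power(2) fin_power(1) edges_ok] sumE using vert_eq[OF i] .
  qed
  show "\<not> (\<exists>S \<subseteq> K4_vertices. \<exists>\<beta>. induced_graph_eigenvalue S K4_edges \<beta> \<and> \<beta>^2 = 5)"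
    by (rule part2)
qed

end
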